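(* Let $0<q<1$, let $\alpha\ge0$ and $k\ge1$ be integers, and let $0<z<q^{2k}$. Then \[ M_k(z;\alpha,q)=\frac{[k+\alpha]_{q^2}!}{[\alpha]_{q^2}!}\,\frac{(z;q^{-2})_k}{(zq^2;q^2)_k}\,q^{-\alpha k}\, B_k\big(0;q^{2\alpha},q^{-2\alpha},z^{-1};q^2\big), \] where \[ B_k\big(0;q^{2\alpha},q^{-2\alpha},z^{-1};q^2\big)={}_3\phi_2\!\left(\begin{matrix}q^{-2k},\,q^{2k+2},\,0\\ q^{2\alpha+2},\,z^{-1}q^2\end{matrix};q^2,\,q^2\right) \] is the Big $q$-Jacobi polynomial $B_n(x;a,b,c;p)={}_3\phi_2\!\left(\begin{smallmatrix}p^{-n},\,abp^{n+1},\,x\\ ap,\,cp\end{smallmatrix};p,p\right)$ with $n=k$, $x=0$, $a=q^{2\alpha}$, $b=q^{-2\alpha}$, $c=z^{-1}$, $p=q^2$.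
   Context: Notation: $(a;q)_n=\prod_{i=0}^{n-1}(1-aq^i)$ (with $(a;q)_0=1$); $[n]_p=(1-p^n)/(1-p)$, $[n]_p!=\prod_{i=1}^n[i]_p$; ${}_3\phi_2\!\left(\begin{smallmatrix}a_1,a_2,a_3\\ b_1,b_2\end{smallmatrix};p,w\right)=\sum_{i\ge0}\frac{(a_1;p)_i(a_2;p)_i(a_3;p)_i}{(b_1;p)_i(b_2;p)_i(p;p)_i}w^i$. $M_k(z;\alpha,q):=\sum_{N\ge1}M_\alpha(k,N)\,N\,z^{N-1}(1-z)^2$, where $M_\alpha(k,N)$ is the $k$-th moment of the normalised one-point function of the discrete $q$-Laguerre ensemble with parameter $\alpha$, understood as given by \[ M_\alpha(k,N)=\frac{q^{k(2-2N-\alpha)}}{N(1-q^2)^k}\frac{(q^{2N};q^2)_k(q^{2N+2\alpha};q^2)_k}{(q^2;q^2)_k}\sum_{l=0}^{k-1}\frac{(q^{2-2k};q^2)_l(q^{2-2N};q^2)_l(q^{2-2N-2\alpha};q^2)_l}{(q^{2-2N-2k};q^2)_l(q^{2-2N-2\alpha-2k};q^2)_l(q^2;q^2)_l}q^{-2kl} \] (the formula obtained from the Morozov–Popolitov–Shakirov Schur-expectation formula for this ensemble). *)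

theory Defs
  imports Complex_Main
begin

definition qpoch :: "real \<Rightarrow> real \<Rightarrow> nat \<Rightarrow> real" where
  "qpoch a p n = (\<Prod>i<n. 1 - a * p ^ i)"

definition qint :: "real \<Rightarrow> nat \<Rightarrow> real" where
  "qint p n = (1 - p ^ n) / (1 - p)"

definition qfact :: "real \<Rightarrow> nat \<Rightarrow> real" where
  "qfact p n = (\<Prod>i=1..n. qint p i)"

definition phi32 :: "real \<Rightarrow> real \<Rightarrow> real \<Rightarrow> real \<Rightarrow> real \<Rightarrow> real \<Rightarrow> real \<Rightarrow> real" where
  "phi32 a1 a2 a3 b1 b2 p w =
     (\<Sum>i. qpoch a1 p i * qpoch a2 p i * qpoch a3 p i
           / (qpoch b1 p i * qpoch b2 p i * qpoch p p i) * w ^ i)"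

definition bigqJacobi :: "nat \<Rightarrow> real \<Rightarrow> real \<Rightarrow> real \<Rightarrow> real \<Rightarrow> real \<Rightarrow> real" where
  "bigqJacobi n x a b c p = phi32 (p powi (- int n)) (a * b * p ^ (n + 1)) x (a * p) (c * p) p p"

text \<open>k-th moment M_alpha(k,N) of the discrete q-Laguerre ensemble (MPS formula).\<close>
definition Mmom :: "real \<Rightarrow> nat \<Rightarrow> nat \<Rightarrow> nat \<Rightarrow> real" where
  "Mmom q \<alpha> k N =
     q powi (int k * (2 - 2 * int N - int \<alpha>)) / (real N * (1 - q\<^sup>2) ^ k)
     * qpoch (q ^ (2 * N)) (q\<^sup>2) k * qpoch (q ^ (2 * N + 2 * \<alpha>)) (q\<^sup>2) k / qpoch (q\<^sup>2) (q\<^sup>2) k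
     * (\<Sum>l<k. qpoch (q powi (2 - 2 * int k)) (q\<^sup>2) l
                 * qpoch (q powi (2 - 2 * int N)) (q\<^sup>2) l
                 * qpoch (q powi (2 - 2 * int N - 2 * int \<alpha>)) (q\<^sup>2) l
               / (qpoch (q powi (2 - 2 * int N - 2 * int k)) (q\<^sup>2) l
                  * qpoch (q powi (2 - 2 * int N - 2 * int \<alpha> - 2 * int k)) (q\<^sup>2) l
                  * qpoch (q\<^sup>2) (q\<^sup>2) l)
               * q powi (- 2 * int k * int l))"

definition Mgen :: "nat \<Rightarrow> real \<Rightarrow> nat \<Rightarrow> real \<Rightarrow> real" where
  "Mgen k z \<alpha> q = (\<Sum>n. Mmom q \<alpha> k (n + 1) * real (n + 1) * z ^ n * (1 - z)\<^sup>2)"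

end

theory Submission
  imports Defs
begin


lemma qpoch_0[simp]: "qpoch a p 0 = 1" by (simp add: qpoch_def)
lemma qpoch_Suc: "qpoch a p (Suc n) = qpoch a p n * (1 - a * p ^ n)"
  by (simp add: qpoch_def)
lemma qpoch_add: "qpoch a p (m + n) = qpoch a p m * qpoch (a * p ^ m) p n"
proof (induction n)
  case 0 then show ?case by simp
next
  case (Suc n) then show ?case by (simp add: qpoch_Suc power_add mult.assoc)
qed
lemma qpoch_Suc': "qpoch a p (Suc n) = (1 - a) * qpoch (a * p) p n"
  using qpoch_add[of a p 1 n] by (simp add: qpoch_def)

lemma qpoch_nz: "(\<And>j. j < n \<Longrightarrow> a * p ^ j \<noteq> 1) \<Longrightarrow> qpoch a p n \<noteq> 0"
  by (auto simp: qpoch_def)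
lemma qpoch_pos: "(\<And>j. j < n \<Longrightarrow> a * p ^ j < 1) \<Longrightarrow> qpoch a p n > 0"
  unfolding qpoch_def by (intro prod_pos) auto
lemma qpoch_zero: "j < n \<Longrightarrow> a * p ^ j = 1 \<Longrightarrow> qpoch a p n = 0"
  unfolding qpoch_def by (intro prod_zero) auto



definition dd :: "nat \<Rightarrow> nat \<Rightarrow> real \<Rightarrow> real" where
  "dd n l p = qpoch (1 / p ^ n) p l / qpoch p p l"

lemma qpoch_pp_pos: "0 < p \<Longrightarrow> p < 1 \<Longrightarrow> qpoch p p l > 0"
  by (rule qpoch_pos) (metis mult.commute power_Suc power_less_one_iff zero_less_Suc less_le)

lemma dd_0[simp]: "dd n 0 p = 1" by (simp add: dd_def)

lemma dd_vanish: "0 < p \<Longrightarrow> n < l \<Longrightarrow> dd n l p = 0"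
  unfolding dd_def by (subst qpoch_zero[of n]) auto

lemma dd_pascal1:
  assumes "0 < p" "p < 1"
  shows "dd (Suc n) (Suc l) p = dd n (Suc l) p - dd n l p / p ^ Suc n"
proof -
  have P: "qpoch p p (Suc l) = qpoch p p l * (1 - p ^ Suc l)" by (simp add: qpoch_Suc)
  have A: "qpoch (1 / p ^ Suc n) p (Suc l) = (1 - 1 / p ^ Suc n) * qpoch (1 / p ^ n) p l"
    using assms by (simp add: qpoch_Suc')
  have B: "qpoch (1 / p ^ n) p (Suc l) = qpoch (1 / p ^ n) p l * (1 - p ^ l / p ^ n)"
    by (simp add: qpoch_Suc)
  have "p ^ Suc l < 1" using assms by (rule power_Suc_less_one)
  then have pos: "qpoch p p l > 0" "1 - p ^ Suc l > 0"
    using assms qpoch_pp_pos by auto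
  show ?thesis unfolding dd_def A B P using assms pos
    by (simp add: field_simps)
qed

lemma qbinom:
  assumes "0 < p" "p < 1"
  shows "(\<Sum>l\<le>n. dd n l p * t ^ l) = qpoch (t / p ^ n) p n"
proof (induction n)
  case 0 then show ?case by simp
next
  case (Suc n)
  have "(\<Sum>l\<le>Suc n. dd (Suc n) l p * t ^ l)
      = 1 + (\<Sum>l\<le>n. dd (Suc n) (Suc l) p * t ^ Suc l)"
    by (subst sum.atMost_Suc_shift) simp
  also have "\<dots> = (1 + (\<Sum>l\<le>n. dd n (Suc l) p * t ^ Suc l))
       - t / p ^ Suc n * (\<Sum>l\<le>n. dd n l p * t ^ l)"
    by (simp add: dd_pascal1[OF assms] algebra_simps sum_subtractf sum_distrib_left)
  also have "1 + (\<Sum>l\<le>n. dd n (Suc l) p * t ^ Suc l) = (\<Sum>l\<le>Suc n. dd n l p * t ^ l)"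
    by (subst sum.atMost_Suc_shift) simp
  also have "\<dots> = (\<Sum>l\<le>n. dd n l p * t ^ l)"
    using dd_vanish[OF assms(1), of n "Suc n"] by simp
  finally show ?case using Suc assms by (simp add: qpoch_Suc' field_simps)
qed



lemma dd_pascal2:
  assumes "0 < p" "p < 1"
  shows "dd (Suc n) (Suc i) p = (dd n (Suc i) p - dd n i p) / p ^ Suc i"
proof -
  have P: "qpoch p p (Suc i) = qpoch p p i * (1 - p ^ Suc i)" by (simp add: qpoch_Suc)
  have A: "qpoch (1 / p ^ Suc n) p (Suc i) = (1 - 1 / p ^ Suc n) * qpoch (1 / p ^ n) p i"
    using assms by (simp add: qpoch_Suc')
  have B: "qpoch (1 / p ^ n) p (Suc i) = qpoch (1 / p ^ n) p i * (1 - p ^ i / p ^ n)"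
    by (simp add: qpoch_Suc)
  have "p ^ Suc i < 1" using assms by (rule power_Suc_less_one)
  then have pos: "qpoch p p i > 0" "1 - p ^ Suc i > 0"
    using assms qpoch_pp_pos by auto
  show ?thesis unfolding dd_def A B P using assms pos
    by (simp add: field_simps)
qed

definition TT :: "real \<Rightarrow> nat \<Rightarrow> real \<Rightarrow> real \<Rightarrow> real" where
  "TT p n b c = (\<Sum>i\<le>n. dd n i p * qpoch b p i * qpoch (c * p ^ i) p (n - i) * p ^ i)"

lemma qchu_poly:
  assumes "0 < p" "p < 1"
  shows "TT p n b c = (\<Prod>j<n. b - c * p ^ j)"
proof (induction n arbitrary: c)
  case 0 then show ?case by (simp add: TT_def)
next
  case (Suc n)
  define A where "A = (\<Sum>i\<le>Suc n. dd n i p * qpoch b p i * qpoch (c * p ^ i) p (Suc n - i))"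
  define B where "B = (\<Sum>j\<le>n. dd n j p * qpoch b p (Suc j) * qpoch (c * p ^ Suc j) p (n - j))"
  have A1: "A = qpoch c p (Suc n) + (\<Sum>j\<le>n. dd n (Suc j) p * qpoch b p (Suc j) * qpoch (c * p ^ Suc j) p (n - j))"
    unfolding A_def by (subst sum.atMost_Suc_shift) simp
  have "TT p (Suc n) b c = qpoch c p (Suc n) + (\<Sum>j\<le>n. dd (Suc n) (Suc j) p * qpoch b p (Suc j) * qpoch (c * p ^ Suc j) p (n - j) * p ^ Suc j)"
    unfolding TT_def by (subst sum.atMost_Suc_shift) simp
  also have "\<dots> = qpoch c p (Suc n) + (\<Sum>j\<le>n. (dd n (Suc j) p - dd n j p) * qpoch b p (Suc j) * qpoch (c * p ^ Suc j) p (n - j))"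
    using assms by (simp add: dd_pascal2)
  also have "\<dots> = A - B" unfolding A1 B_def
    by (simp add: algebra_simps sum_subtractf)
  finally have T1: "TT p (Suc n) b c = A - B" .
  have A2: "A = (\<Sum>i\<le>n. dd n i p * qpoch b p i * ((1 - c * p ^ i) * qpoch (c * p ^ Suc i) p (n - i)))"
  proof -
    have "A = (\<Sum>i\<le>n. dd n i p * qpoch b p i * qpoch (c * p ^ i) p (Suc n - i))"
      unfolding A_def using dd_vanish[OF assms(1), of n "Suc n"] by simp
    also have "\<dots> = (\<Sum>i\<le>n. dd n i p * qpoch b p i * ((1 - c * p ^ i) * qpoch (c * p ^ Suc i) p (n - i)))"
    proof (rule sum.cong[OF refl])
      fix i assume "i \<in> {..n}"
      then have "Suc n - i = Suc (n - i)" by auto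
      then show "dd n i p * qpoch b p i * qpoch (c * p ^ i) p (Suc n - i) =
          dd n i p * qpoch b p i * ((1 - c * p ^ i) * qpoch (c * p ^ Suc i) p (n - i))"
        by (simp add: qpoch_Suc' mult.assoc mult.commute[of "p ^ i" p])
    qed
    finally show ?thesis .
  qed
  have B2: "B = (\<Sum>i\<le>n. dd n i p * qpoch b p i * ((1 - b * p ^ i) * qpoch (c * p ^ Suc i) p (n - i)))"
    unfolding B_def by (simp add: qpoch_Suc mult.assoc)
  have "A - B = (b - c) * (\<Sum>i\<le>n. dd n i p * qpoch b p i * qpoch (c * p * p ^ i) p (n - i) * p ^ i)"
    unfolding A2 B2 sum_subtractf[symmetric] sum_distrib_left
    by (rule sum.cong[OF refl]) (simp add: algebra_simps)
  also have "\<dots> = (b - c) * (\<Prod>j<n. b - c * p * p ^ j)"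
    using Suc.IH[of "c * p"] unfolding TT_def by simp
  also have "\<dots> = (\<Prod>j<Suc n. b - c * p ^ j)"
    by (subst prod.lessThan_Suc_shift) (simp add: mult.assoc)
  finally show ?case using T1 by simp
qed



definition cc :: "nat \<Rightarrow> nat \<Rightarrow> real \<Rightarrow> real" where
  "cc k m p = qpoch (p ^ Suc m) p k / qpoch p p k"

lemma pow_lt1: "0 < p \<Longrightarrow> p < (1::real) \<Longrightarrow> 0 < n \<Longrightarrow> p ^ n < 1"
  by (simp add: power_less_one_iff)

lemma cc_nonneg: "0 < p \<Longrightarrow> p < 1 \<Longrightarrow> cc k m p \<ge> 0"
  unfolding cc_def
  by (intro divide_nonneg_pos less_imp_le qpoch_pos qpoch_pp_pos)
     (auto simp del: power_Suc simp: power_add[symmetric] intro!: power_Suc_less_one)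

lemma cc_0[simp]: "0 < p \<Longrightarrow> p < 1 \<Longrightarrow> cc k 0 p = 1"
  unfolding cc_def using qpoch_pp_pos[of p k] by simp

lemma cc_step:
  assumes "0 < p" "p < 1"
  shows "cc (Suc k) (Suc m) p = cc k (Suc m) p + p ^ Suc k * cc (Suc k) m p"
proof -
  have P: "qpoch p p (Suc k) = qpoch p p k * (1 - p ^ Suc k)" by (simp add: qpoch_Suc)
  have A: "qpoch (p ^ Suc (Suc m)) p (Suc k) = qpoch (p ^ Suc (Suc m)) p k * (1 - p ^ Suc (Suc m) * p ^ k)"
    by (simp add: qpoch_Suc)
  have B: "qpoch (p ^ Suc m) p (Suc k) = (1 - p ^ Suc m) * qpoch (p ^ Suc (Suc m)) p k"
    by (simp add: qpoch_Suc' mult.commute)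
  have "p ^ Suc k < 1" using assms by (rule power_Suc_less_one)
  then have pos: "qpoch p p k > 0" "1 - p ^ Suc k > 0"
    using assms qpoch_pp_pos by auto
  show ?thesis unfolding cc_def A B P using pos
    by (simp add: field_simps)
qed

lemma cc_conv:
  assumes "0 < p" "p < 1"
  shows "cc (Suc k) m p = (\<Sum>j\<le>m. cc k j p * (p ^ Suc k) ^ (m - j))"
proof (induction m)
  case 0 then show ?case using assms by simp
next
  case (Suc m)
  have "(\<Sum>j\<le>Suc m. cc k j p * (p ^ Suc k) ^ (Suc m - j))
     = (\<Sum>j\<le>m. cc k j p * (p ^ Suc k) ^ (Suc m - j)) + cc k (Suc m) p" by simp
  also have "(\<Sum>j\<le>m. cc k j p * (p ^ Suc k) ^ (Suc m - j)) = p ^ Suc k * (\<Sum>j\<le>m. cc k j p * (p ^ Suc k) ^ (m - j))"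
    unfolding sum_distrib_left by (rule sum.cong[OF refl]) (simp add: Suc_diff_le algebra_simps)
  finally show ?case using Suc assms by (simp add: cc_step)
qed

lemma cc_sums:
  assumes "0 < p" "p < 1" "0 \<le> t" "t < 1"
  shows "(\<lambda>m. cc k m p * t ^ m) sums (1 / qpoch t p (Suc k))"
proof (induction k)
  case 0
  have "cc 0 m p = 1" for m unfolding cc_def by simp
  then show ?case using geometric_sums[of t] assms by (simp add: qpoch_def)
next
  case (Suc k)
  define a where "a i = cc k i p * t ^ i" for i
  define b where "b i = (p ^ Suc k * t) ^ i" for i
  have pk: "p ^ Suc k < 1" "0 < p ^ Suc k" using assms power_Suc_less_one[of p k] by (auto simp del: power_Suc)
  have lt: "p ^ Suc k * t < p ^ Suc k * 1" using pk assms by (intro mult_strict_left_mono) auto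
  have bt: "0 \<le> p ^ Suc k * t" "p ^ Suc k * t < 1"
    using pk assms apply (simp del: power_Suc)
    using lt pk(1) by linarith
  have sa: "a sums (1 / qpoch t p (Suc k))" using Suc unfolding a_def .
  have sb: "b sums (1 / (1 - p ^ Suc k * t))" unfolding b_def using bt by (intro geometric_sums) auto
  have na: "summable (\<lambda>i. norm (a i))"
    using sa assms cc_nonneg[OF assms(1,2)] unfolding a_def by (simp add: sums_summable)
  have nb: "summable (\<lambda>i. norm (b i))"
    using sb bt unfolding b_def by (simp add: sums_summable)
  have "(\<lambda>m. \<Sum>i\<le>m. a i * b (m - i)) sums (suminf a * suminf b)"
    by (rule Cauchy_product_sums[OF na nb])
  moreover have "(\<Sum>i\<le>m. a i * b (m - i)) = cc (Suc k) m p * t ^ m" for m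
  proof -
    have "(\<Sum>i\<le>m. a i * b (m - i)) = (\<Sum>i\<le>m. cc k i p * (p ^ Suc k) ^ (m - i) * t ^ m)"
      unfolding a_def b_def
      by (rule sum.cong[OF refl]) (simp add: power_mult_distrib power_add[symmetric])
    then show ?thesis using cc_conv[OF assms(1,2)] by (simp add: sum_distrib_right)
  qed
  moreover have "suminf a * suminf b = 1 / qpoch t p (Suc (Suc k))"
    using sa sb by (simp add: sums_iff qpoch_Suc mult.commute)
  ultimately show ?case by simp
qed



lemma Flem:
  assumes "u \<noteq> 0" "p \<noteq> 0"
  shows "p ^ k * qpoch u p k * (1 - 1 / (u * p ^ k)) = qpoch (u * p) p k * (1 - 1 / u)"
proof (cases k)
  case 0 then show ?thesis by simp
next
  case (Suc k')
  have A: "qpoch u p k = (1 - u) * qpoch (u * p) p k'" using Suc by (simp add: qpoch_Suc')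
  have B: "qpoch (u * p) p k = qpoch (u * p) p k' * (1 - u * p * p ^ k')" using Suc by (simp add: qpoch_Suc)
  show ?thesis unfolding A B using assms Suc by (simp add: field_simps)
qed

lemma Elem:
  assumes "y \<noteq> 0" "p \<noteq> 0"
  shows "qpoch y p k * qpoch (p / y) p l = p ^ (k * l) * qpoch (y / p ^ l) p k * qpoch (p / (y * p ^ k)) p l"
proof (induction l)
  case 0 then show ?case by simp
next
  case (Suc l)
  define u where "u = y / p ^ Suc l"
  have u0: "u \<noteq> 0" using assms unfolding u_def by simp
  have F: "p ^ k * qpoch u p k * (1 - 1 / (u * p ^ k)) = qpoch (u * p) p k * (1 - 1 / u)"
    by (rule Flem[OF u0 assms(2)])
  have e1: "u * p = y / p ^ l" "1 / u = p / y * p ^ l" "1 / (u * p ^ k) = p / (y * p ^ k) * p ^ l"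
    using assms unfolding u_def by (simp_all add: field_simps)
  have "p ^ (k * Suc l) * qpoch (y / p ^ Suc l) p k * qpoch (p / (y * p ^ k)) p (Suc l)
      = p ^ (k * l) * (p ^ k * qpoch u p k * (1 - 1 / (u * p ^ k))) * qpoch (p / (y * p ^ k)) p l"
    unfolding qpoch_Suc u_def[symmetric] e1(3)[symmetric] by (simp add: power_add algebra_simps)
  also have "\<dots> = p ^ (k * l) * (qpoch (u * p) p k * (1 - 1 / u)) * qpoch (p / (y * p ^ k)) p l"
    by (simp only: F)
  also have "\<dots> = p ^ (k * l) * qpoch (y / p ^ l) p k * qpoch (p / (y * p ^ k)) p l * (1 - p / y * p ^ l)"
    by (simp only: e1(1,2)) (simp add: algebra_simps)
  also have "\<dots> = qpoch y p k * qpoch (p / y) p (Suc l)"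
    unfolding Suc.IH[symmetric] qpoch_Suc by simp
  finally show ?case by simp
qed



lemma powi_nat_diff: "(q::real) \<noteq> 0 \<Longrightarrow> q powi (int a - int b) = q ^ a / q ^ b"
  by (simp add: power_int_diff)

lemma powi_conv: "(q::real) \<noteq> 0 \<Longrightarrow> e = int a - int b \<Longrightarrow> q powi e = q ^ a / q ^ b"
  by (simp add: power_int_diff)

lemma pow_inj: "0 < (p::real) \<Longrightarrow> p < 1 \<Longrightarrow> p ^ m = p ^ n \<Longrightarrow> m = n"
  by (metis linorder_neqE_nat power_strict_decreasing less_irrefl)

lemma denom_nz:
  assumes "0 < p" "p < 1" "l < k" "1 \<le> N"
  shows "qpoch (p / (p ^ M * p ^ N * p ^ k)) p l \<noteq> 0"
proof (rule qpoch_nz)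
  fix j assume j: "j < l"
  show "p / (p ^ M * p ^ N * p ^ k) * p ^ j \<noteq> 1"
  proof
    assume "p / (p ^ M * p ^ N * p ^ k) * p ^ j = 1"
    then have "p ^ Suc j = p ^ (M + N + k)" using assms by (simp add: field_simps power_add)
    then have "Suc j = M + N + k" using pow_inj assms by blast
    then show False using j assms by simp
  qed
qed

lemma alg6:
  fixes x1 x2 c d e f g h t y1 y2 :: real
  assumes "x1 * c = t * (y1 * f)" "x2 * d = t * (y2 * g)" "f \<noteq> 0" "g \<noteq> 0" "t \<noteq> 0" "h \<noteq> 0"
  shows "x1 * x2 * (e * c * d / (f * g * h) * (1 / t)) = e / h * t * y1 * y2"
proof -
  have "x1 * x2 * (e * c * d / (f * g * h) * (1 / t)) = (x1 * c) * (x2 * d) * e / (f * g * h * t)"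
    by (simp add: field_simps)
  also have "\<dots> = (t * (y1 * f)) * (t * (y2 * g)) * e / (f * g * h * t)" using assms by simp
  also have "\<dots> = e / h * t * y1 * y2" using assms by (simp add: field_simps)
  finally show ?thesis .
qed

lemma Mterm:
  fixes q :: real and \<alpha> :: nat
  assumes q: "0 < q" "q < 1" and k: "1 \<le> k" and N: "1 \<le> N" and l: "l < k"
  defines "p \<equiv> q\<^sup>2" and "a \<equiv> (q\<^sup>2) ^ \<alpha>"
  shows "qpoch (p ^ N) p k * qpoch (a * p ^ N) p k *
     (qpoch (q powi (2 - 2 * int k)) (q\<^sup>2) l
                 * qpoch (q powi (2 - 2 * int N)) (q\<^sup>2) l
                 * qpoch (q powi (2 - 2 * int N - 2 * int \<alpha>)) (q\<^sup>2) l
               / (qpoch (q powi (2 - 2 * int N - 2 * int k)) (q\<^sup>2) l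
                  * qpoch (q powi (2 - 2 * int N - 2 * int \<alpha> - 2 * int k)) (q\<^sup>2) l
                  * qpoch (q\<^sup>2) (q\<^sup>2) l)
               * q powi (- 2 * int k * int l))
   = dd (k - 1) l p * p ^ (k * l) * qpoch (p ^ N / p ^ l) p k * qpoch (a * p ^ N / p ^ l) p k"
proof -
  have p: "0 < p" "p < 1" unfolding p_def using q by (auto simp: power_less_one_iff)
  have a: "0 < a" unfolding a_def using q by simp
  have q0: "q \<noteq> 0" using q by simp
  have e1: "q powi (2 - 2 * int k) = 1 / p ^ (k - 1)"
  proof -
    obtain k' where k': "k = Suc k'" using k by (cases k) auto
    have "q powi (2 - 2 * int k) = q powi (int 2 - int (2 * k))"
      by (rule arg_cong[where f="\<lambda>e. q powi e"]) simp
    also have "\<dots> = q ^ 2 / q ^ (2 * k)" by (rule powi_nat_diff[OF q0])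
    finally show ?thesis using q0 unfolding p_def k' by (simp add: power_mult[symmetric] power2_eq_square) (simp add: power_mult power2_eq_square)
  qed
  have e2: "q powi (2 - 2 * int N) = p / p ^ N"
    using powi_conv[OF q0, of "2 - 2 * int N" 2 "2 * N"] unfolding p_def by (simp add: power_mult)
  have e3: "q powi (2 - 2 * int N - 2 * int \<alpha>) = p / (a * p ^ N)"
    using powi_conv[OF q0, of "2 - 2 * int N - 2 * int \<alpha>" 2 "2 * \<alpha> + 2 * N"] unfolding p_def a_def by (simp add: power_mult power_add)
  have e4: "q powi (2 - 2 * int N - 2 * int k) = p / (p ^ N * p ^ k)"
    using powi_conv[OF q0, of "2 - 2 * int N - 2 * int k" 2 "2 * N + 2 * k"] unfolding p_def by (simp add: power_mult power_add)
  have e5: "q powi (2 - 2 * int N - 2 * int \<alpha> - 2 * int k) = p / (a * p ^ N * p ^ k)"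
    using powi_conv[OF q0, of "2 - 2 * int N - 2 * int \<alpha> - 2 * int k" 2 "2 * \<alpha> + 2 * N + 2 * k"] unfolding p_def a_def by (simp add: power_mult power_add)
  have e6: "q powi (- 2 * int k * int l) = 1 / p ^ (k * l)"
    using powi_conv[OF q0, of "- 2 * int k * int l" 0 "2 * (k * l)"] unfolding p_def by (simp add: power_mult)
  have E1: "qpoch (p ^ N) p k * qpoch (p / p ^ N) p l = p ^ (k * l) * qpoch (p ^ N / p ^ l) p k * qpoch (p / (p ^ N * p ^ k)) p l"
    using Elem[of "p ^ N" p k l] p by simp
  have E2: "qpoch (a * p ^ N) p k * qpoch (p / (a * p ^ N)) p l = p ^ (k * l) * qpoch (a * p ^ N / p ^ l) p k * qpoch (p / (a * p ^ N * p ^ k)) p l"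
    using Elem[of "a * p ^ N" p k l] p a by simp
  have D1: "qpoch (p / (p ^ N * p ^ k)) p l \<noteq> 0"
    using denom_nz[OF p l N, of 0] by simp
  have D2: "qpoch (p / (a * p ^ N * p ^ k)) p l \<noteq> 0"
    using denom_nz[OF p l N, of \<alpha>] unfolding a_def p_def by simp
  have D3: "qpoch p p l > 0" using qpoch_pp_pos p by simp
  have pd: "p ^ (k * l) > 0" using p by simp
  show ?thesis
    unfolding e1 e2 e3 e4 e5 e6 p_def[symmetric] dd_def
    by (rule alg6[OF _ _ D1 D2]) (use E1 E2 D3 pd p in \<open>simp_all add: mult.assoc\<close>)
qed



definition hh :: "real \<Rightarrow> real \<Rightarrow> nat \<Rightarrow> nat \<Rightarrow> nat \<Rightarrow> real" where
  "hh p a k N l = qpoch (p ^ N / p ^ l) p k * qpoch (a * p ^ N / p ^ l) p k / (p ^ N / p ^ l) ^ k"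

lemma MmomN:
  fixes q :: real and \<alpha> k N :: nat
  assumes q: "0 < q" "q < 1" and k: "1 \<le> k" and N: "1 \<le> N"
  defines "p \<equiv> q\<^sup>2" and "a \<equiv> (q\<^sup>2) ^ \<alpha>"
  shows "real N * Mmom q \<alpha> k N = q powi (- int \<alpha> * int k) * p ^ k / ((1 - p) ^ k * qpoch p p k)
           * (\<Sum>l<k. dd (k - 1) l p * hh p a k N l)"
proof -
  have p: "0 < p" "p < 1" unfolding p_def using q by (auto simp: power_less_one_iff)
  have q0: "q \<noteq> 0" using q by simp
  define C0 where "C0 = q powi (- int \<alpha> * int k)"
  have pw: "q powi (int k * (2 - 2 * int N - int \<alpha>)) = C0 * (p ^ k / p ^ (N * k))"
  proof -
    have "q powi (int k * (2 - 2 * int N - int \<alpha>)) = q powi ((- int \<alpha> * int k) + (int (2*k) - int (2*(N*k))))"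
      by (rule arg_cong[where f="\<lambda>e. q powi e"]) (simp add: algebra_simps)
    also have "\<dots> = C0 * q powi (int (2*k) - int (2*(N*k)))"
      unfolding C0_def by (rule power_int_add) (use q0 in simp)
    also have "\<dots> = C0 * (q ^ (2*k) / q ^ (2*(N*k)))"
      by (simp only: powi_conv[OF q0 refl])
    finally show ?thesis unfolding p_def by (simp add: power_mult)
  qed
  have x1: "q ^ (2 * N) = p ^ N" and x2: "q ^ (2 * N + 2 * \<alpha>) = a * p ^ N"
    unfolding p_def a_def by (simp_all add: power_mult[symmetric] power_add mult.commute)
  define T where "T l = (qpoch (q powi (2 - 2 * int k)) (q\<^sup>2) l
                 * qpoch (q powi (2 - 2 * int N)) (q\<^sup>2) l
                 * qpoch (q powi (2 - 2 * int N - 2 * int \<alpha>)) (q\<^sup>2) l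
               / (qpoch (q powi (2 - 2 * int N - 2 * int k)) (q\<^sup>2) l
                  * qpoch (q powi (2 - 2 * int N - 2 * int \<alpha> - 2 * int k)) (q\<^sup>2) l
                  * qpoch (q\<^sup>2) (q\<^sup>2) l)
               * q powi (- 2 * int k * int l))" for l
  have MT: "qpoch (p ^ N) p k * qpoch (a * p ^ N) p k * T l
     = dd (k - 1) l p * p ^ (k * l) * qpoch (p ^ N / p ^ l) p k * qpoch (a * p ^ N / p ^ l) p k" if "l < k" for l
    unfolding T_def p_def a_def using Mterm[OF q k N that, of \<alpha>] by simp
  have hhl: "p ^ (k * l) / p ^ (N * k) * qpoch (p ^ N / p ^ l) p k * qpoch (a * p ^ N / p ^ l) p k = hh p a k N l" for l
    unfolding hh_def using p by (simp add: power_divide power_mult[symmetric] mult.commute)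
  have Mm: "Mmom q \<alpha> k N = q powi (int k * (2 - 2 * int N - int \<alpha>)) / (real N * (1 - q\<^sup>2) ^ k)
     * qpoch (q ^ (2 * N)) (q\<^sup>2) k * qpoch (q ^ (2 * N + 2 * \<alpha>)) (q\<^sup>2) k / qpoch (q\<^sup>2) (q\<^sup>2) k
     * (\<Sum>l<k. T l)"
    unfolding Mmom_def T_def by (rule refl)
  have "real N * Mmom q \<alpha> k N = C0 * p ^ k / ((1 - p) ^ k * qpoch p p k) / p ^ (N * k)
      * (\<Sum>l<k. qpoch (p ^ N) p k * qpoch (a * p ^ N) p k * T l)"
    unfolding Mm pw x1 x2 sum_distrib_left[symmetric] p_def[symmetric]
    using N by (simp add: field_simps)
  also have "\<dots> = C0 * p ^ k / ((1 - p) ^ k * qpoch p p k) * (\<Sum>l<k. 1 / p ^ (N * k) * (qpoch (p ^ N) p k * qpoch (a * p ^ N) p k * T l))"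
    by (simp only: sum_distrib_left[symmetric]) simp
  also have "\<dots> = C0 * p ^ k / ((1 - p) ^ k * qpoch p p k) * (\<Sum>l<k. dd (k - 1) l p * hh p a k N l)"
  proof (rule arg_cong[where f="\<lambda>x. _ * x"], rule sum.cong[OF refl])
    fix l assume "l \<in> {..<k}"
    then have "l < k" by simp
    then show "1 / p ^ (N * k) * (qpoch (p ^ N) p k * qpoch (a * p ^ N) p k * T l) = dd (k - 1) l p * hh p a k N l"
      unfolding MT[OF \<open>l < k\<close>] hhl[symmetric] by (simp add: field_simps)
  qed
  finally show ?thesis unfolding C0_def .
qed



definition H0 :: "real \<Rightarrow> real \<Rightarrow> nat \<Rightarrow> nat \<Rightarrow> real" where
  "H0 p a k n = qpoch (p ^ Suc n) p k * qpoch (a * p ^ Suc n) p k / (p ^ Suc n) ^ k"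

lemma hh_vanish:
  assumes "0 < p" "n < l" "l < k"
  shows "hh p a k (Suc n) l = 0"
proof -
  have "qpoch (p ^ Suc n / p ^ l) p k = 0"
  proof (rule qpoch_zero[of "l - Suc n"])
    show "l - Suc n < k" using assms by simp
    have "p ^ Suc n * p ^ (l - Suc n) = p ^ l" using assms by (subst power_add[symmetric]) simp
    then show "p ^ Suc n / p ^ l * p ^ (l - Suc n) = 1" using assms by (simp add: field_simps)
  qed
  then show ?thesis unfolding hh_def by simp
qed

lemma hh_shift:
  assumes "0 < p"
  shows "hh p a k (Suc (n + l)) l = H0 p a k n"
proof -
  have "p ^ Suc (n + l) = p ^ Suc n * p ^ l" by (simp add: power_add)
  then show ?thesis unfolding hh_def H0_def using assms by simp
qed

lemma H0_expand:
  assumes "0 < p" "p < 1"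
  shows "H0 p a k n * z ^ n = qpoch p p k * (\<Sum>r\<le>k. dd k r p * a ^ r * p ^ ((k + 1) * r) / p ^ k
             * (cc k n p * (z * p ^ r / p ^ k) ^ n))"
proof -
  have c: "qpoch (p ^ Suc n) p k = cc k n p * qpoch p p k"
    unfolding cc_def using qpoch_pp_pos[OF assms, of k] by simp
  have b: "qpoch (a * p ^ Suc n) p k = (\<Sum>r\<le>k. dd k r p * (a * p ^ Suc n * p ^ k) ^ r)"
    using qbinom[OF assms, of k "a * p ^ Suc n * p ^ k"] assms by simp
  have e: "(a * p ^ Suc n * p ^ k) ^ r * z ^ n / (p ^ Suc n) ^ k
      = a ^ r * p ^ ((k + 1) * r) / p ^ k * (z * p ^ r / p ^ k) ^ n" for r
  proof -
    have "(a * p ^ Suc n * p ^ k) ^ r * z ^ n * (p ^ k * (p ^ k) ^ n)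
        = a ^ r * p ^ ((k + 1) * r) * (z * p ^ r) ^ n * (p ^ Suc n) ^ k"
      by (simp add: power_mult_distrib power_add[symmetric] power_mult[symmetric] algebra_simps)
    then show ?thesis using assms by (simp add: field_simps power_divide)
  qed
  have "H0 p a k n * z ^ n = (\<Sum>r\<le>k. cc k n p * qpoch p p k * (dd k r p * (a * p ^ Suc n * p ^ k) ^ r) / (p ^ Suc n) ^ k * z ^ n)"
    unfolding H0_def c b sum_distrib_left sum_divide_distrib sum_distrib_right by simp
  also have "\<dots> = qpoch p p k * (\<Sum>r\<le>k. dd k r p * a ^ r * p ^ ((k + 1) * r) / p ^ k
             * (cc k n p * (z * p ^ r / p ^ k) ^ n))"
    unfolding sum_distrib_left
  proof (rule sum.cong[OF refl])
    fix r
    have "cc k n p * qpoch p p k * (dd k r p * (a * p ^ Suc n * p ^ k) ^ r) / (p ^ Suc n) ^ k * z ^ n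
        = cc k n p * qpoch p p k * dd k r p * ((a * p ^ Suc n * p ^ k) ^ r * z ^ n / (p ^ Suc n) ^ k)"
      by simp
    also have "\<dots> = cc k n p * qpoch p p k * dd k r p * (a ^ r * p ^ ((k + 1) * r) / p ^ k * (z * p ^ r / p ^ k) ^ n)"
      unfolding e ..
    finally show "cc k n p * qpoch p p k * (dd k r p * (a * p ^ Suc n * p ^ k) ^ r) / (p ^ Suc n) ^ k * z ^ n =
        qpoch p p k * (dd k r p * a ^ r * p ^ ((k + 1) * r) / p ^ k * (cc k n p * (z * p ^ r / p ^ k) ^ n))"
      by simp
  qed
  finally show ?thesis .
qed



lemma H_sums:
  assumes p: "0 < p" "p < 1" and z: "0 < z" "z < p ^ k"
  shows "(\<lambda>n. H0 p a k n * z ^ n) sums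
    (qpoch p p k * (\<Sum>r\<le>k. dd k r p * a ^ r * p ^ ((k + 1) * r) / p ^ k * (1 / qpoch (z * p ^ r / p ^ k) p (Suc k))))"
proof -
  have "(\<lambda>n. \<Sum>r\<le>k. dd k r p * a ^ r * p ^ ((k + 1) * r) / p ^ k * (cc k n p * (z * p ^ r / p ^ k) ^ n))
     sums (\<Sum>r\<le>k. dd k r p * a ^ r * p ^ ((k + 1) * r) / p ^ k * (1 / qpoch (z * p ^ r / p ^ k) p (Suc k)))"
  proof (rule sums_sum, rule sums_mult, rule cc_sums[OF p])
    fix r
    show "0 \<le> z * p ^ r / p ^ k" using p z by simp
    have "p ^ r \<le> 1" using p by (simp add: power_le_one)
    then have "z * p ^ r \<le> z" using z by (simp add: mult_le_cancel_left1)
    then have "z * p ^ r < p ^ k" using z by linarith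
    then show "z * p ^ r / p ^ k < 1" using p by simp
  qed
  then show ?thesis
    unfolding H0_expand[OF p] by (rule sums_mult)
qed

lemma hh_sums:
  assumes p: "0 < p" "p < 1" and z: "0 < z" "z < p ^ k" and l: "l < k"
  shows "(\<lambda>n. hh p a k (Suc n) l * z ^ n) sums
    (z ^ l * (qpoch p p k * (\<Sum>r\<le>k. dd k r p * a ^ r * p ^ ((k + 1) * r) / p ^ k * (1 / qpoch (z * p ^ r / p ^ k) p (Suc k)))))"
proof -
  define f where "f i = hh p a k (Suc i) l * z ^ i" for i
  have "(\<lambda>i. f (i + l)) = (\<lambda>i. z ^ l * (H0 p a k i * z ^ i))"
    unfolding f_def using hh_shift[OF p(1)] by (simp add: power_add algebra_simps)
  moreover have "\<And>i. i < l \<Longrightarrow> f i = 0" unfolding f_def using hh_vanish[OF p(1) _ l] by simp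
  ultimately show ?thesis using sums_zero_iff_shift[of l f] H_sums[OF p z, of a] sums_mult
    unfolding f_def by fastforce
qed



lemma gen_sums:
  fixes q z :: real and \<alpha> k :: nat
  assumes q: "0 < q" "q < 1" and k: "1 \<le> k" and z: "0 < z" "z < (q\<^sup>2) ^ k"
  defines "p \<equiv> q\<^sup>2" and "a \<equiv> (q\<^sup>2) ^ \<alpha>"
  defines "Hv \<equiv> qpoch p p k * (\<Sum>r\<le>k. dd k r p * a ^ r * p ^ ((k + 1) * r) / p ^ k * (1 / qpoch (z * p ^ r / p ^ k) p (Suc k)))"
  shows "(\<lambda>n. Mmom q \<alpha> k (n + 1) * real (n + 1) * z ^ n) sums
     (q powi (- int \<alpha> * int k) * p ^ k / ((1 - p) ^ k * qpoch p p k) * (qpoch (z / p ^ (k - 1)) p (k - 1) * Hv))"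
proof -
  have p: "0 < p" "p < 1" unfolding p_def using q by (auto simp: power_less_one_iff)
  have z': "0 < z" "z < p ^ k" using z unfolding p_def by auto
  define C1 where "C1 = q powi (- int \<alpha> * int k) * p ^ k / ((1 - p) ^ k * qpoch p p k)"
  have t: "Mmom q \<alpha> k (n + 1) * real (n + 1) * z ^ n = C1 * (\<Sum>l<k. dd (k - 1) l p * (hh p a k (Suc n) l * z ^ n))" for n
  proof -
    have "Mmom q \<alpha> k (n + 1) * real (n + 1) * z ^ n = (real (n + 1) * Mmom q \<alpha> k (n + 1)) * z ^ n"
      by simp
    also have "\<dots> = C1 * (\<Sum>l<k. dd (k - 1) l p * hh p a k (n + 1) l) * z ^ n"
      using MmomN[OF q k, of "n + 1" \<alpha>] unfolding C1_def p_def a_def by simp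
    finally show ?thesis by (simp add: sum_distrib_left sum_distrib_right mult.assoc)
  qed
  have "(\<lambda>n. \<Sum>l<k. dd (k - 1) l p * (hh p a k (Suc n) l * z ^ n)) sums (\<Sum>l<k. dd (k - 1) l p * (z ^ l * Hv))"
    by (rule sums_sum, rule sums_mult) (use hh_sums[OF p z'] in \<open>simp add: Hv_def\<close>)
  moreover have "(\<Sum>l<k. dd (k - 1) l p * (z ^ l * Hv)) = qpoch (z / p ^ (k - 1)) p (k - 1) * Hv"
  proof -
    have "{..<k} = {..k - 1}" using k by auto
    then show ?thesis using qbinom[OF p, of "k - 1" z]
      by (simp add: sum_distrib_right[symmetric] mult.assoc[symmetric])
  qed
  ultimately have "(\<lambda>n. C1 * (\<Sum>l<k. dd (k - 1) l p * (hh p a k (Suc n) l * z ^ n))) sums (C1 * (qpoch (z / p ^ (k - 1)) p (k - 1) * Hv))"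
    by (intro sums_mult) simp
  then show ?thesis unfolding t C1_def .
qed



lemma qfact_eq: "p \<noteq> 1 \<Longrightarrow> qfact p n = qpoch p p n / (1 - p) ^ n"
proof (induction n)
  case 0 then show ?case by (simp add: qfact_def)
next
  case (Suc n)
  have "qfact p (Suc n) = qfact p n * qint p (Suc n)"
    unfolding qfact_def by (simp add: prod.nat_ivl_Suc')
  then show ?case using Suc by (simp add: qint_def qpoch_Suc field_simps)
qed

lemma K1:
  assumes p: "0 < p" "p < 1" and i: "i \<le> k" and nz: "qpoch (a * p) p i \<noteq> 0"
  shows "qpoch (a * p) p k / qpoch (a * p) p i = (\<Sum>r\<le>k. dd (k - i) r p * (a ^ r * p ^ ((k + 1) * r)))"
proof -
  have "qpoch (a * p) p k = qpoch (a * p) p (i + (k - i))" using i by simp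
  also have "\<dots> = qpoch (a * p) p i * qpoch (a * p * p ^ i) p (k - i)" by (rule qpoch_add)
  finally have A: "qpoch (a * p) p k / qpoch (a * p) p i = qpoch (a * p * p ^ i) p (k - i)" using nz by simp
  have e: "a * p ^ (k + 1) / p ^ (k - i) = a * p * p ^ i"
  proof -
    have "p ^ (k + 1) = p ^ (k - i) * (p * p ^ i)" using i by (simp flip: power_add power_Suc)
    then show ?thesis using p by simp
  qed
  have B: "qpoch (a * p * p ^ i) p (k - i) = (\<Sum>r\<le>k - i. dd (k - i) r p * (a * p ^ (k + 1)) ^ r)"
    using qbinom[OF p, of "k - i" "a * p ^ (k + 1)"] unfolding e by simp
  have C: "(\<Sum>r\<le>k. dd (k - i) r p * (a ^ r * p ^ ((k + 1) * r))) = (\<Sum>r\<le>k - i. dd (k - i) r p * (a ^ r * p ^ ((k + 1) * r)))"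
    by (rule sum.mono_neutral_right) (auto simp: dd_vanish[OF p(1)])
  have D: "(a * p ^ (k + 1)) ^ r = a ^ r * p ^ ((k + 1) * r)" for r
    by (simp add: power_mult_distrib power_add power_mult[symmetric] mult.commute)
  show ?thesis unfolding A B C D ..
qed

lemma K2pt:
  assumes p: "0 < p" and i: "i \<le> k" and r: "r \<le> k"
  shows "qpoch (1 / p ^ k) p i * dd (k - i) r p = dd k r p * qpoch (1 / p ^ (k - r)) p i"
proof -
  have e1: "1 / p ^ k * p ^ i = 1 / p ^ (k - i)" "1 / p ^ k * p ^ r = 1 / p ^ (k - r)"
    using p i r by (simp_all add: power_diff)
  have "qpoch (1 / p ^ k) p (i + r) = qpoch (1 / p ^ k) p i * qpoch (1 / p ^ (k - i)) p r"
    using qpoch_add[of "1 / p ^ k" p i r] unfolding e1 .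
  moreover have "qpoch (1 / p ^ k) p (r + i) = qpoch (1 / p ^ k) p r * qpoch (1 / p ^ (k - r)) p i"
    using qpoch_add[of "1 / p ^ k" p r i] unfolding e1 .
  ultimately show ?thesis unfolding dd_def by (simp add: add.commute)
qed

lemma pz_nz:
  assumes p: "0 < p" "p < 1" and z: "0 < z" "z < p ^ k" and n: "n \<le> k"
  shows "qpoch (p / z) p n \<noteq> 0"
proof (rule qpoch_nz)
  fix j assume j: "j < n"
  have "p ^ k \<le> p ^ Suc j" using p j n by (intro power_decreasing) auto
  then have "z < p * p ^ j" using z by simp
  then show "p / z * p ^ j \<noteq> 1" using z by (auto simp: field_simps)
qed

lemma K3:
  assumes p: "0 < p" "p < 1" and z: "0 < z" "z < p ^ k" and r: "r \<le> k"
  shows "(\<Sum>i\<le>k. qpoch (1 / p ^ (k - r)) p i * qpoch (p ^ (k + 1)) p i * p ^ i / (qpoch (p / z) p i * qpoch p p i))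
       = (\<Prod>j<k - r. p ^ (k + 1) - p / z * p ^ j) / qpoch (p / z) p (k - r)"
proof -
  define n where "n = k - r"
  have n: "n \<le> k" unfolding n_def by simp
  have cn: "qpoch (p / z) p n \<noteq> 0" by (rule pz_nz[OF p z n])
  have "(\<Sum>i\<le>k. qpoch (1 / p ^ n) p i * qpoch (p ^ (k + 1)) p i * p ^ i / (qpoch (p / z) p i * qpoch p p i))
      = (\<Sum>i\<le>n. qpoch (1 / p ^ n) p i * qpoch (p ^ (k + 1)) p i * p ^ i / (qpoch (p / z) p i * qpoch p p i))"
    by (rule sum.mono_neutral_right) (use n in \<open>auto simp: qpoch_zero[of n _ "1 / p ^ n" p] p\<close>)
  also have "\<dots> = (\<Sum>i\<le>n. dd n i p * qpoch (p ^ (k + 1)) p i * qpoch (p / z * p ^ i) p (n - i) * p ^ i) / qpoch (p / z) p n"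
    unfolding sum_divide_distrib
  proof (rule sum.cong[OF refl])
    fix i assume "i \<in> {..n}"
    then have i: "i \<le> n" by simp
    have split: "qpoch (p / z) p n = qpoch (p / z) p i * qpoch (p / z * p ^ i) p (n - i)"
      using qpoch_add[of "p / z" p i "n - i"] i by simp
    have ci: "qpoch (p / z) p i \<noteq> 0" using pz_nz[OF p z, of i] i n by simp
    have ci2: "qpoch (p / z * p ^ i) p (n - i) \<noteq> 0" using cn split by simp
    show "qpoch (1 / p ^ n) p i * qpoch (p ^ (k + 1)) p i * p ^ i / (qpoch (p / z) p i * qpoch p p i) =
         dd n i p * qpoch (p ^ (k + 1)) p i * qpoch (p / z * p ^ i) p (n - i) * p ^ i / qpoch (p / z) p n"
      unfolding split dd_def using ci ci2 qpoch_pp_pos[OF p, of i] by (simp add: field_simps)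
  qed
  also have "\<dots> = (\<Prod>j<n. p ^ (k + 1) - p / z * p ^ j) / qpoch (p / z) p n"
    using qchu_poly[OF p, of n "p ^ (k + 1)" "p / z"] unfolding TT_def by simp
  finally show ?thesis unfolding n_def .
qed



lemma REV:
  assumes "0 < p"
  shows "(1 - z) * qpoch (z / p ^ r) p r = (1 - z / p ^ r) * qpoch z (1 / p) r"
proof (induction r)
  case 0 then show ?case by simp
next
  case (Suc r)
  have A: "qpoch (z / p ^ Suc r) p (Suc r) = (1 - z / p ^ Suc r) * qpoch (z / p ^ r) p r"
    using assms by (simp add: qpoch_Suc')
  have B: "qpoch z (1 / p) (Suc r) = qpoch z (1 / p) r * (1 - z / p ^ r)"
    by (simp add: qpoch_Suc power_one_over)
  have "(1 - z) * qpoch (z / p ^ Suc r) p (Suc r) = (1 - z / p ^ Suc r) * ((1 - z) * qpoch (z / p ^ r) p r)"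
    unfolding A by (simp only: mult_ac)
  also have "\<dots> = (1 - z / p ^ Suc r) * ((1 - z / p ^ r) * qpoch z (1 / p) r)" using Suc.IH by simp
  also have "\<dots> = (1 - z / p ^ Suc r) * qpoch z (1 / p) (Suc r)" unfolding B by (simp only: mult_ac)
  finally show ?case .
qed

lemma abs_alg:
  fixes w QA QB QC QD QE Pr s1 s2 s3 s4 s5 s6 a b :: real
  assumes "w * QA * QB * QC = QD * s6 * QE * Pr" "s1 * s2 * s3 * s6 = s4 * s5 * s6 * (a * b)"
  shows "w * (s1 * QA) * (QB * s2) * (QC * s3) = s4 * QD * s5 * (QE * s6) * (a * b * Pr)"
proof -
  have "w * (s1 * QA) * (QB * s2) * (QC * s3) = (w * QA * QB * QC) * (s1 * s2 * s3)" by (simp only: mult_ac)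
  also have "\<dots> = QD * QE * Pr * (s1 * s2 * s3 * s6)" unfolding assms(1) by (simp only: mult_ac)
  also have "\<dots> = QD * QE * Pr * (s4 * s5 * s6 * (a * b))" unfolding assms(2) ..
  also have "\<dots> = s4 * QD * s5 * (QE * s6) * (a * b * Pr)" by (simp only: mult_ac)
  finally show ?thesis .
qed

lemma PI:
  assumes p: "0 < p" and z: "z \<noteq> 0"
  shows "(1 - z)\<^sup>2 * qpoch (z / p ^ (r + n)) p (r + n) * qpoch (z * p) p (r + n) * qpoch (p / z) p n
     = qpoch (z * p ^ r / p ^ (r + n)) p (Suc (r + n)) * (1 - z / p ^ (r + n)) * qpoch z (1 / p) (r + n)
       * (\<Prod>j<n. p ^ (r + n + 1) - p / z * p ^ j)"
proof (induction n)
  case 0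
  have e: "z * p ^ r / p ^ r = z" using p by simp
  have Q: "qpoch z p (Suc r) = (1 - z) * qpoch (z * p) p r" by (simp add: qpoch_Suc')
  have "qpoch (z * p ^ r / p ^ (r + 0)) p (Suc (r + 0)) * (1 - z / p ^ (r + 0)) * qpoch z (1 / p) (r + 0)
        * (\<Prod>j<0. p ^ (r + 0 + 1) - p / z * p ^ j)
      = (1 - z) * qpoch (z * p) p r * ((1 - z / p ^ r) * qpoch z (1 / p) r)"
    unfolding add_0_right e Q by simp
  also have "\<dots> = (1 - z) * qpoch (z * p) p r * ((1 - z) * qpoch (z / p ^ r) p r)"
    unfolding REV[OF p, of z r] ..
  finally show ?case by (simp add: power2_eq_square mult_ac)
next
  case (Suc n)
  define k where "k = r + n"
  have A1: "qpoch (z / p ^ Suc k) p (Suc k) = (1 - z / p ^ Suc k) * qpoch (z / p ^ k) p k"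
    using p by (simp add: qpoch_Suc')
  have A2: "qpoch (z * p) p (Suc k) = qpoch (z * p) p k * (1 - z * p * p ^ k)"
    by (simp add: qpoch_Suc)
  have A3: "qpoch (p / z) p (Suc n) = qpoch (p / z) p n * (1 - p / z * p ^ n)"
    by (simp add: qpoch_Suc)
  have B1: "qpoch (z * p ^ r / p ^ Suc k) p (Suc (Suc k)) = (1 - z * p ^ r / p ^ Suc k) * qpoch (z * p ^ r / p ^ k) p (Suc k)"
    using p by (simp add: qpoch_Suc')
  have B2: "qpoch z (1 / p) (Suc k) = qpoch z (1 / p) k * (1 - z / p ^ k)"
    by (simp add: qpoch_Suc power_one_over)
  have B3: "(\<Prod>j<Suc n. p ^ (Suc k + 1) - p / z * p ^ j) = (p ^ (k + 2) - p / z) * p ^ n * (\<Prod>j<n. p ^ (k + 1) - p / z * p ^ j)"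
  proof -
    have "(\<Prod>j<Suc n. p ^ (Suc k + 1) - p / z * p ^ j) = (p ^ (k + 2) - p / z) * (\<Prod>j<n. p ^ (k + 2) - p / z * p ^ Suc j)"
      by (subst prod.lessThan_Suc_shift) simp
    also have "(\<Prod>j<n. p ^ (k + 2) - p / z * p ^ Suc j) = (\<Prod>j<n. p * (p ^ (k + 1) - p / z * p ^ j))"
      by (rule prod.cong[OF refl]) (simp add: algebra_simps)
    also have "\<dots> = p ^ n * (\<Prod>j<n. p ^ (k + 1) - p / z * p ^ j)"
      by (simp add: prod.distrib)
    finally show ?thesis by simp
  qed
  have IH: "(1 - z)\<^sup>2 * qpoch (z / p ^ k) p k * qpoch (z * p) p k * qpoch (p / z) p n
     = qpoch (z * p ^ r / p ^ k) p (Suc k) * (1 - z / p ^ k) * qpoch z (1 / p) k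
       * (\<Prod>j<n. p ^ (k + 1) - p / z * p ^ j)"
    using Suc.IH unfolding k_def .
  have sc: "(1 - z / p ^ Suc k) * (1 - z * p * p ^ k) * (1 - p / z * p ^ n) * (1 - z / p ^ k)
     = (1 - z * p ^ r / p ^ Suc k) * (1 - z / p ^ Suc k) * (1 - z / p ^ k) * ((p ^ (k + 2) - p / z) * p ^ n)"
  proof -
    have "z * p ^ r / p ^ Suc k = z / p ^ Suc n" using p unfolding k_def by (simp add: power_add)
    then show ?thesis using p z by (simp add: field_simps k_def power_add)
  qed
  have "r + Suc n = Suc k" unfolding k_def by simp
  show ?case
    unfolding \<open>r + Suc n = Suc k\<close> A1 A2 A3 B1 B2 B3
    by (rule abs_alg[OF IH sc])
qed



lemma div_alg:
  fixes w s L B C D E P :: real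
  assumes "w * (s * L) * B * C = D * s * E * P" "s \<noteq> 0" "B \<noteq> 0" "C \<noteq> 0" "D \<noteq> 0"
  shows "w * L / D = E / B * (P / C)"
proof -
  have "(w * L * B * C) * s = (D * E * P) * s" using assms(1) by (simp only: mult_ac)
  then have "w * L * B * C = D * E * P" using assms(2) by simp
  then show ?thesis using assms(3-5) by (simp add: field_simps)
qed

lemma perR:
  assumes p: "0 < p" "p < 1" and z: "0 < z" "z < p ^ k" and k: "1 \<le> k" and r: "r \<le> k"
  shows "(1 - z)\<^sup>2 * qpoch (z / p ^ (k - 1)) p (k - 1) / qpoch (z * p ^ r / p ^ k) p (Suc k)
     = qpoch z (1 / p) k / qpoch (z * p) p k * ((\<Prod>j<k - r. p ^ (k + 1) - p / z * p ^ j) / qpoch (p / z) p (k - r))"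
proof -
  have rk: "r + (k - r) = k" using r by simp
  have PI': "(1 - z)\<^sup>2 * qpoch (z / p ^ k) p k * qpoch (z * p) p k * qpoch (p / z) p (k - r)
     = qpoch (z * p ^ r / p ^ k) p (Suc k) * (1 - z / p ^ k) * qpoch z (1 / p) k
       * (\<Prod>j<k - r. p ^ (k + 1) - p / z * p ^ j)"
    using PI[OF p(1), of z r "k - r"] z unfolding rk by simp
  obtain k' where k': "k = Suc k'" using k by (cases k) auto
  have sp: "qpoch (z / p ^ k) p k = (1 - z / p ^ k) * qpoch (z / p ^ (k - 1)) p (k - 1)"
    unfolding k' using p by (simp add: qpoch_Suc')
  have nz1: "1 - z / p ^ k \<noteq> 0" using z p by simp
  have nz2: "qpoch (z * p) p k \<noteq> 0"
  proof (rule qpoch_nz)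
    fix j assume "j < k"
    have "p * p ^ j \<le> 1" using p by (simp add: mult_le_one power_le_one)
    moreover have "z < 1" using z p power_le_one[of p k] by linarith
    ultimately have "z * (p * p ^ j) < 1" using z mult_left_le[of "p * p ^ j" z] by linarith
    then show "z * p * p ^ j \<noteq> 1" by (simp add: mult.assoc)
  qed
  have nz3: "qpoch (p / z) p (k - r) \<noteq> 0" by (rule pz_nz[OF p z]) simp
  have nz4: "qpoch (z * p ^ r / p ^ k) p (Suc k) \<noteq> 0"
  proof (rule qpoch_nz)
    fix j
    have "p ^ (r + j) \<le> 1" using p by (simp add: power_le_one)
    then have "z * p ^ (r + j) < p ^ k" using z mult_left_le[of "p ^ (r + j)" z] by linarith
    then show "z * p ^ r / p ^ k * p ^ j \<noteq> 1" using p by (simp add: power_add field_simps)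
  qed
  show ?thesis
    by (rule div_alg[OF PI'[unfolded sp] nz1 nz2 nz3 nz4])
qed



lemma RHSsum:
  assumes p: "0 < p" "p < 1" and z: "0 < z" "z < p ^ k" and a: "0 < a" "a \<le> 1"
  shows "qpoch (a * p) p k * (\<Sum>i\<le>k. qpoch (1 / p ^ k) p i * qpoch (p ^ (k + 1)) p i
            / (qpoch (a * p) p i * qpoch (p / z) p i * qpoch p p i) * p ^ i)
    = (\<Sum>r\<le>k. dd k r p * (a ^ r * p ^ ((k + 1) * r)) *
          ((\<Prod>j<k - r. p ^ (k + 1) - p / z * p ^ j) / qpoch (p / z) p (k - r)))"
proof -
  define V where "V i = qpoch (p ^ (k + 1)) p i * p ^ i / (qpoch (p / z) p i * qpoch p p i)" for i
  define X where "X r = a ^ r * p ^ ((k + 1) * r)" for r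
  have apnz: "qpoch (a * p) p i \<noteq> 0" for i
  proof (rule qpoch_nz)
    fix j
    have "p * p ^ j < 1" using p by (metis power_Suc power_Suc_less_one)
    moreover have "a * (p * p ^ j) \<le> p * p ^ j" using a p by (intro mult_left_le_one_le) auto
    ultimately have "a * (p * p ^ j) < 1" by linarith
    then show "a * p * p ^ j \<noteq> 1" by (simp add: mult.assoc)
  qed
  have "qpoch (a * p) p k * (\<Sum>i\<le>k. qpoch (1 / p ^ k) p i * qpoch (p ^ (k + 1)) p i
            / (qpoch (a * p) p i * qpoch (p / z) p i * qpoch p p i) * p ^ i)
      = (\<Sum>i\<le>k. qpoch (1 / p ^ k) p i * V i * (qpoch (a * p) p k / qpoch (a * p) p i))"
    unfolding sum_distrib_left V_def by (rule sum.cong[OF refl]) (simp add: field_simps)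
  also have "\<dots> = (\<Sum>i\<le>k. qpoch (1 / p ^ k) p i * V i * (\<Sum>r\<le>k. dd (k - i) r p * X r))"
    by (rule sum.cong[OF refl]) (simp add: K1[OF p _ apnz] X_def)
  also have "\<dots> = (\<Sum>i\<le>k. \<Sum>r\<le>k. dd k r p * X r * (qpoch (1 / p ^ (k - r)) p i * V i))"
    unfolding sum_distrib_left
  proof (rule sum.cong[OF refl], rule sum.cong[OF refl])
    fix i r assume "i \<in> {..k}" "r \<in> {..k}"
    then have "i \<le> k" "r \<le> k" by auto
    from K2pt[OF p(1) this] show "qpoch (1 / p ^ k) p i * V i * (dd (k - i) r p * X r) =
         dd k r p * X r * (qpoch (1 / p ^ (k - r)) p i * V i)"
      by (metis (no_types, lifting) mult.assoc mult.commute mult.left_commute)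
  qed
  also have "\<dots> = (\<Sum>r\<le>k. dd k r p * X r * (\<Sum>i\<le>k. qpoch (1 / p ^ (k - r)) p i * V i))"
    unfolding sum_distrib_left by (rule sum.swap)
  also have "\<dots> = (\<Sum>r\<le>k. dd k r p * X r *
          ((\<Prod>j<k - r. p ^ (k + 1) - p / z * p ^ j) / qpoch (p / z) p (k - r)))"
  proof (rule sum.cong[OF refl])
    fix r assume "r \<in> {..k}"
    then have r: "r \<le> k" by simp
    have "(\<Sum>i\<le>k. qpoch (1 / p ^ (k - r)) p i * V i) = (\<Sum>i\<le>k. qpoch (1 / p ^ (k - r)) p i * qpoch (p ^ (k + 1)) p i * p ^ i / (qpoch (p / z) p i * qpoch p p i))"
      unfolding V_def by (simp add: mult.assoc)
    then show "dd k r p * X r * (\<Sum>i\<le>k. qpoch (1 / p ^ (k - r)) p i * V i) =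
      dd k r p * X r * ((\<Prod>j<k - r. p ^ (k + 1) - p / z * p ^ j) / qpoch (p / z) p (k - r))"
      using K3[OF p z r] by simp
  qed
  finally show ?thesis unfolding X_def .
qed



lemma bigq:
  fixes q z :: real and \<alpha> k :: nat
  assumes q: "0 < q" "q < 1" and z: "0 < z"
  defines "p \<equiv> q\<^sup>2" and "a \<equiv> (q\<^sup>2) ^ \<alpha>"
  shows "bigqJacobi k 0 (q ^ (2 * \<alpha>)) (q powi (- 2 * int \<alpha>)) (inverse z) (q\<^sup>2)
    = (\<Sum>i\<le>k. qpoch (1 / p ^ k) p i * qpoch (p ^ (k + 1)) p i
            / (qpoch (a * p) p i * qpoch (p / z) p i * qpoch p p i) * p ^ i)"
proof -
  have q0: "q \<noteq> 0" using q by simp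
  have p0: "0 < p" unfolding p_def using q by simp
  have e1: "q ^ (2 * \<alpha>) = a" unfolding a_def by (simp add: power_mult)
  have e2: "q powi (- 2 * int \<alpha>) = 1 / a"
    using powi_conv[OF q0, of "- 2 * int \<alpha>" 0 "2 * \<alpha>"] unfolding a_def by (simp add: power_mult)
  have e3: "p powi (- int k) = 1 / p ^ k" by (simp add: power_int_minus divide_inverse)
  have a0: "a \<noteq> 0" unfolding a_def using q by simp
  have e4: "a * (1 / a) * p ^ (k + 1) = p ^ (k + 1)" using a0 by simp
  have e5: "inverse z * p = p / z" by (simp add: divide_inverse mult.commute)
  have q00: "qpoch 0 p i = 1" for i by (simp add: qpoch_def)
  have "bigqJacobi k 0 (q ^ (2 * \<alpha>)) (q powi (- 2 * int \<alpha>)) (inverse z) (q\<^sup>2)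
     = (\<Sum>i. qpoch (1 / p ^ k) p i * qpoch (p ^ (k + 1)) p i
            / (qpoch (a * p) p i * qpoch (p / z) p i * qpoch p p i) * p ^ i)"
    unfolding bigqJacobi_def phi32_def e1 e2 p_def[symmetric] e3 e4 e5 q00 by simp
  also have "\<dots> = (\<Sum>i\<le>k. qpoch (1 / p ^ k) p i * qpoch (p ^ (k + 1)) p i
            / (qpoch (a * p) p i * qpoch (p / z) p i * qpoch p p i) * p ^ i)"
  proof (rule suminf_finite)
    fix i assume "i \<notin> {..k}"
    then have "k < i" by simp
    then have "qpoch (1 / p ^ k) p i = 0" using p0 by (intro qpoch_zero[of k]) auto
    then show "qpoch (1 / p ^ k) p i * qpoch (p ^ (k + 1)) p i
            / (qpoch (a * p) p i * qpoch (p / z) p i * qpoch p p i) * p ^ i = 0" by simp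
  qed simp
  finally show ?thesis .
qed

lemma qfact_ratio:
  assumes p: "0 < p" "p < 1"
  shows "qfact p (k + \<alpha>) / qfact p \<alpha> = qpoch (p ^ \<alpha> * p) p k / (1 - p) ^ k"
proof -
  have p1: "p \<noteq> 1" using p by simp
  have "qpoch p p (\<alpha> + k) = qpoch p p \<alpha> * qpoch (p ^ \<alpha> * p) p k"
    using qpoch_add[of p p \<alpha> k] by (simp add: mult.commute)
  moreover have "qpoch p p \<alpha> > 0" using qpoch_pp_pos[OF p] .
  moreover have "1 - p \<noteq> 0" using p by simp
  ultimately show ?thesis unfolding qfact_eq[OF p1]
    by (simp add: add.commute power_add field_simps)
qed



theorem mainTheorem6:
  fixes q z :: real and \<alpha> k :: nat
  assumes "0 < q" "q < 1" "1 \<le> k" "0 < z" "z < q ^ (2 * k)"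
  shows "Mgen k z \<alpha> q =
    qfact (q\<^sup>2) (k + \<alpha>) / qfact (q\<^sup>2) \<alpha>
    * (qpoch z (q powi (-2)) k / qpoch (z * q\<^sup>2) (q\<^sup>2) k)
    * q powi (- int \<alpha> * int k)
    * bigqJacobi k 0 (q ^ (2 * \<alpha>)) (q powi (- 2 * int \<alpha>)) (inverse z) (q\<^sup>2)"
proof -
  define p where "p = q\<^sup>2"
  define a where "a = (q\<^sup>2) ^ \<alpha>"
  define C0 where "C0 = q powi (- int \<alpha> * int k)"
  have q: "0 < q" "q < 1" using assms by auto
  have k: "1 \<le> k" using assms by simp
  have p: "0 < p" "p < 1" unfolding p_def using q by (auto simp: power_less_one_iff)
  have z: "0 < z" "z < p ^ k" using assms unfolding p_def by (auto simp: power_mult)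
  have z2: "z < (q\<^sup>2) ^ k" using z(2) unfolding p_def by simp
  have a: "0 < a" "a \<le> 1" unfolding a_def using p unfolding p_def by (auto simp: power_le_one)
  have q0: "q \<noteq> 0" using q by simp
  define Hv where "Hv = qpoch p p k * (\<Sum>r\<le>k. dd k r p * a ^ r * p ^ ((k + 1) * r) / p ^ k * (1 / qpoch (z * p ^ r / p ^ k) p (Suc k)))"
  define Pr where "Pr r = (\<Prod>j<k - r. p ^ (k + 1) - p / z * p ^ j) / qpoch (p / z) p (k - r)" for r
  define Z where "Z = qpoch z (1 / p) k / qpoch (z * p) p k"
  have G: "(\<lambda>n. Mmom q \<alpha> k (n + 1) * real (n + 1) * z ^ n) sums
     (C0 * p ^ k / ((1 - p) ^ k * qpoch p p k) * (qpoch (z / p ^ (k - 1)) p (k - 1) * Hv))"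
    using gen_sums[OF q k assms(4) z2, of \<alpha>] unfolding C0_def Hv_def p_def a_def .
  have L1: "Mgen k z \<alpha> q = C0 * p ^ k / ((1 - p) ^ k * qpoch p p k) * (qpoch (z / p ^ (k - 1)) p (k - 1) * Hv) * (1 - z)\<^sup>2"
    unfolding Mgen_def using sums_unique[OF sums_mult2[OF G, of "(1 - z)\<^sup>2"]] by simp
  have ppk: "qpoch p p k > 0" using qpoch_pp_pos[OF p] .
  have L2: "C0 * p ^ k / ((1 - p) ^ k * qpoch p p k) * (qpoch (z / p ^ (k - 1)) p (k - 1) * Hv) * (1 - z)\<^sup>2
      = C0 / (1 - p) ^ k * (\<Sum>r\<le>k. dd k r p * (a ^ r * p ^ ((k + 1) * r)) *
          ((1 - z)\<^sup>2 * qpoch (z / p ^ (k - 1)) p (k - 1) / qpoch (z * p ^ r / p ^ k) p (Suc k)))"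
    unfolding Hv_def sum_distrib_left
    by (simp add: sum_distrib_left[symmetric] sum_distrib_right[symmetric] sum_divide_distrib[symmetric])
       (use ppk p in \<open>simp add: field_simps sum_distrib_left\<close>)
  also have "\<dots> = C0 / (1 - p) ^ k * (Z * (\<Sum>r\<le>k. dd k r p * (a ^ r * p ^ ((k + 1) * r)) * Pr r))"
    unfolding sum_distrib_left
  proof (intro arg_cong[where f="\<lambda>x. C0 / (1 - p) ^ k * x"] sum.cong refl)
    fix r assume "r \<in> {..k}"
    then have r: "r \<le> k" by simp
    have W: "(1 - z)\<^sup>2 * qpoch (z / p ^ (k - 1)) p (k - 1) / qpoch (z * p ^ r / p ^ k) p (Suc k) = Z * Pr r"
      unfolding Pr_def Z_def by (rule perR[OF p z k r])
    show "dd k r p * (a ^ r * p ^ ((k + 1) * r)) *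
          ((1 - z)\<^sup>2 * qpoch (z / p ^ (k - 1)) p (k - 1) / qpoch (z * p ^ r / p ^ k) p (Suc k))
        = Z * (dd k r p * (a ^ r * p ^ ((k + 1) * r)) * Pr r)"
      unfolding W by (simp only: mult_ac)
  qed
  also have "(\<Sum>r\<le>k. dd k r p * (a ^ r * p ^ ((k + 1) * r)) * Pr r)
     = qpoch (a * p) p k * (\<Sum>i\<le>k. qpoch (1 / p ^ k) p i * qpoch (p ^ (k + 1)) p i
            / (qpoch (a * p) p i * qpoch (p / z) p i * qpoch p p i) * p ^ i)"
    unfolding Pr_def using RHSsum[OF p z a] by simp
  also have "(\<Sum>i\<le>k. qpoch (1 / p ^ k) p i * qpoch (p ^ (k + 1)) p i
            / (qpoch (a * p) p i * qpoch (p / z) p i * qpoch p p i) * p ^ i)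
     = bigqJacobi k 0 (q ^ (2 * \<alpha>)) (q powi (- 2 * int \<alpha>)) (inverse z) (q\<^sup>2)"
    using bigq[OF q assms(4), of k \<alpha>] unfolding p_def a_def by simp
  finally have L: "Mgen k z \<alpha> q = C0 / (1 - p) ^ k * (Z * (qpoch (a * p) p k * bigqJacobi k 0 (q ^ (2 * \<alpha>)) (q powi (- 2 * int \<alpha>)) (inverse z) (q\<^sup>2)))"
    using L1 by simp
  have R1: "qfact p (k + \<alpha>) / qfact p \<alpha> = qpoch (a * p) p k / (1 - p) ^ k"
    using qfact_ratio[OF p, of k \<alpha>] unfolding p_def a_def by simp
  have R2: "q powi (-2) = 1 / p"
    using powi_conv[OF q0, of "-2" 0 2] unfolding p_def by simp
  show ?thesis unfolding L C0_def[symmetric] p_def[symmetric] R1 R2 Z_def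
    by (simp add: field_simps)
qed


end
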